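(* Let $d\ge 2$ and let $f$ be a monic centered polynomial of degree $d^2$. Then the following are equivalent: (1) $f(z)=(z^d+a)^d+b$ for some $a\in\mathbb{C}\setminus\{0\}$ and $b\in\mathbb{C}$; (2) $f$ has exactly $d+1$ distinct critical points $\alpha_1,\dots,\alpha_{d+1}$, with local degree $\deg_{\alpha_i}(f)=d$ for each $i$, and such that $f(\alpha_1)=f(\alpha_2)=\cdots=f(\alpha_d)$.
   Context: A polynomial is monic if its leading coefficient is $1$ and centered if the coefficient of the second highest degree term is $0$ (equivalently, the sum of its critical points, with multiplicity, is $0$). The local degree $\deg_\alpha(f)$ is the multiplicity with which $f$ takes the value $f(\alpha)$ at $\alpha$. *)

theory Defs
  imports "HOL-Computational_Algebra.Polynomial"
begin

definition monic_poly :: "complex poly \<Rightarrow> bool" where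
  "monic_poly f \<longleftrightarrow> lead_coeff f = 1"

definition centered_poly :: "complex poly \<Rightarrow> bool" where
  "centered_poly f \<longleftrightarrow> coeff f (degree f - 1) = 0"

definition crit_points :: "complex poly \<Rightarrow> complex set" where
  "crit_points f = {z. poly (pderiv f) z = 0}"

definition local_degree :: "complex poly \<Rightarrow> complex \<Rightarrow> nat" where
  "local_degree f \<alpha> = order \<alpha> (f - [:poly f \<alpha>:])"

end

theory Submission
  imports Defs "HOL-Computational_Algebra.Fundamental_Theorem_Algebra"
begin

lemma order_pow: "(p::complex poly) \<noteq> 0 \<Longrightarrow> order a (p^n) = n * order a p"
  by (induction n) (auto simp: order_mult)

lemma local_deg:
  assumes "degree f \<ge> 1"
  shows "local_degree f z = Suc (order z (pderiv f))"
proof -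
  have ne: "f - [:poly f z:] \<noteq> 0"
  proof
    assume "f - [:poly f z:] = 0"
    then have "f = [:poly f z:]" by simp
    then have "degree f = 0" by (metis degree_pCons_0)
    with assms show False by simp
  qed
  have "poly (f - [:poly f z:]) z = 0" by simp
  from order_pderiv[OF ne this] show ?thesis
    by (simp add: local_degree_def pderiv_diff pderiv_pCons)
qed

lemma coeff_mult_second:
  fixes p q :: "complex poly"
  assumes "degree p = m" "degree q = n" "m \<ge> 1" "n \<ge> 1"
  shows "coeff (p*q) (m+n-1) = coeff p (m-1) * coeff q n + coeff p m * coeff q (n-1)"
proof -
  have "coeff (p*q) (m+n-1) = (\<Sum>i\<le>m+n-1. coeff p i * coeff q (m+n-1-i))"
    by (simp add: coeff_mult)
  also have "\<dots> = (\<Sum>i\<in>{m-1,m}. coeff p i * coeff q (m+n-1-i))"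
  proof (rule sum.mono_neutral_right)
    show "finite {..m+n-1}" by simp
    show "{m-1,m} \<subseteq> {..m+n-1}" using assms by auto
    show "\<forall>i\<in>{..m + n - 1} - {m - 1, m}. coeff p i * coeff q (m + n - 1 - i) = 0"
    proof
      fix i assume i: "i \<in> {..m + n - 1} - {m - 1, m}"
      show "coeff p i * coeff q (m + n - 1 - i) = 0"
      proof (cases "i > m")
        case True then show ?thesis using assms by (simp add: coeff_eq_0)
      next
        case False
        then have "m+n-1-i > n" using i assms by auto
        then show ?thesis using assms by (simp add: coeff_eq_0)
      qed
    qed
  qed
  also have "\<dots> = coeff p (m-1) * coeff q n + coeff p m * coeff q (n-1)"
    using assms by (simp add: add.commute)
  finally show ?thesis .
qed

lemma coeff_power_second:
  fixes p :: "complex poly"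
  assumes "degree p = m" "m \<ge> 1" "lead_coeff p = 1"
  shows "coeff (p^Suc n) (Suc n*m - 1) = of_nat (Suc n) * coeff p (m-1)"
proof (induction n)
  case 0 then show ?case by simp
next
  case (Suc n)
  have p0: "p \<noteq> 0" using assms by auto
  have dp: "degree (p^Suc n) = Suc n * m" using assms degree_power_eq[OF p0, of "Suc n"] by simp
  have lp: "lead_coeff (p^Suc n) = 1" using assms lead_coeff_power[of p "Suc n"] by (simp del: power_Suc)
  have "coeff (p^Suc (Suc n)) (Suc (Suc n)*m - 1) = coeff (p * p^Suc n) (m + Suc n * m - 1)"
    by simp
  also have "\<dots> = coeff p (m-1) * coeff (p^Suc n) (Suc n * m) + coeff p m * coeff (p^Suc n) (Suc n * m - 1)"
    by (rule coeff_mult_second) (use assms dp in auto)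
  also have "\<dots> = of_nat (Suc (Suc n)) * coeff p (m-1)"
    using Suc lp dp assms by (simp add: algebra_simps)
  finally show ?case .
qed

lemma order_eq_degree:
  fixes p :: "complex poly"
  assumes "p \<noteq> 0" "order b p = degree p"
  shows "p = smult (lead_coeff p) ([:-b,1:]^degree p)"
proof -
  obtain q where q: "p = [:-b,1:]^degree p * q" using order_1[of b p] assms(2) by (metis dvdE)
  have q0: "q \<noteq> 0" using q assms(1) by auto
  have z: "[:-b,1:]^degree p \<noteq> 0" by simp
  have "degree p = degree ([:-b,1:]^degree p * q)" using q by simp
  also have "\<dots> = degree ([:-b,1:]^degree p) + degree q" by (rule degree_mult_eq[OF z q0])
  also have "degree ([:-b,1:]^degree p) = degree p" by (simp add: degree_linear_power)
  finally have "degree p = degree p + degree q" .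
  then have "degree q = 0" by simp
  then have qc: "q = [:coeff q 0:]" by (metis degree_0_id)
  have "p = [:-b,1:]^degree p * [:coeff q 0:]" using q qc by metis
  then have pe: "p = smult (coeff q 0) ([:-b,1:]^degree p)" by (simp add: mult.commute)
  have "lead_coeff (smult (coeff q 0) ([:-b,1:]^degree p)) = coeff q 0"
    by (simp add: lead_coeff_power lead_coeff_smult)
  then have "lead_coeff p = coeff q 0" using pe by simp
  then show ?thesis using pe by simp
qed


lemma dir2:
  fixes f :: "complex poly" and d :: nat and \<alpha> :: "nat \<Rightarrow> complex"
  assumes d2: "d \<ge> 2" and mon: "monic_poly f" and cen: "centered_poly f"
    and degf: "degree f = d ^ 2"
    and inj: "inj_on \<alpha> {1..d+1}" and crit: "\<alpha> ` {1..d+1} = crit_points f"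
    and ld: "\<forall>i\<in>{1..d+1}. local_degree f (\<alpha> i) = d"
    and eqv: "\<forall>i\<in>{1..d}. poly f (\<alpha> i) = poly f (\<alpha> 1)"
  shows "\<exists>a b. a \<noteq> 0 \<and> f = (monom 1 d + [:a:]) ^ d + [:b:]"
proof -
  define A where "A = \<alpha> ` {1..d}"
  define \<beta> where "\<beta> = \<alpha> (d+1)"
  define c where "c = poly f (\<alpha> 1)"
  define h where "h = f - [:c:]"
  have dd: "d*d \<ge> 2*2" using mult_le_mono[OF d2 d2] .
  have deg1: "degree f \<ge> 1" using degf dd d2 by (simp add: power2_eq_square)
  have bA: "\<beta> \<notin> A"
  proof
    assume "\<beta> \<in> A"
    then obtain i where i: "i \<in> {1..d}" "\<alpha> i = \<alpha> (d+1)" unfolding A_def \<beta>_def by auto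
    then have "i = d+1" using inj by (auto dest: inj_onD)
    with i show False by simp
  qed
  have injA: "inj_on \<alpha> {1..d}" using inj by (rule inj_on_subset) auto
  have cardA: "card A = d" unfolding A_def using card_image[OF injA] by simp
  have finA: "finite A" unfolding A_def by simp
  have hf: "h = f + [:-c:]" by (simp add: h_def)
  have hdeg: "degree h = degree f" unfolding hf using deg1 by (subst degree_add_eq_left) auto
  have hlead: "lead_coeff h = 1" using hdeg deg1 mon unfolding h_def monic_poly_def
    by (simp add: coeff_pCons split: nat.split)
  have h0: "h \<noteq> 0" using hlead by auto
  have ordA: "order z h = d" if zA: "z \<in> A" for z
  proof -
    obtain i where i: "i \<in> {1..d}" "z = \<alpha> i" using zA A_def by auto
    have e1: "order (\<alpha> i) (f - [:poly f (\<alpha> i):]) = d" using ld i unfolding local_degree_def by auto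
    have pc: "poly f (\<alpha> i) = c" using eqv i(1) unfolding c_def by blast
    have "order (\<alpha> i) (f - [:c:]) = d" using e1 by (simp only: pc)
    then show ?thesis unfolding h_def i(2) .
  qed
  define R where "R = {z. poly h z = 0}"
  have finR: "finite R" unfolding R_def using poly_roots_finite[OF h0] .
  have AR: "A \<subseteq> R"
  proof
    fix z assume "z \<in> A"
    then have "order z h \<noteq> 0" using ordA[of z] d2 by linarith
    then show "z \<in> R" unfolding R_def using order_root[of h z] by simp
  qed
  define F where "F = (\<lambda>z. [:-z,1:] ^ order z h)"
  have "smult (lead_coeff h) (prod F R) = h" unfolding F_def R_def by (rule complex_poly_decompose)
  then have hdec: "h = prod F R" unfolding hlead by simp
  have split: "prod F R = prod F (R - A) * prod F A"
    using prod.subset_diff[OF AR finR] .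
  have FA: "prod F A = (\<Prod>z\<in>A. [:-z,1:]) ^ d"
    unfolding F_def prod_power_distrib by (rule prod.cong) (auto simp: ordA)
  have "degree (prod F R) = (\<Sum>z\<in>R. degree (F z))"
    by (rule degree_prod_eq_sum_degree) (simp add: F_def)
  also have "\<dots> = (\<Sum>z\<in>R. order z h)" unfolding F_def by (simp add: degree_linear_power)
  finally have "degree h = (\<Sum>z\<in>R. order z h)" by (simp only: hdec[symmetric])
  also have "\<dots> = (\<Sum>z\<in>R-A. order z h) + (\<Sum>z\<in>A. order z h)"
    using sum.subset_diff[OF AR finR] .
  also have "(\<Sum>z\<in>A. order z h) = d * d" using ordA cardA by simp
  finally have "(\<Sum>z\<in>R-A. order z h) + d * d = d * d" unfolding hdeg degf by (simp add: power2_eq_square)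
  then have "(\<Sum>z\<in>R-A. order z h) = 0" by linarith
  then have "\<forall>z\<in>R-A. order z h = 0" using finR by simp
  then have "prod F (R - A) = 1" unfolding F_def by simp
  define g where "g = (\<Prod>z\<in>A. [:-z,1:])"
  have hg: "h = g ^ d" unfolding g_def using hdec split FA \<open>prod F (R - A) = 1\<close> by (simp only: mult_1)
  have fg: "f = g ^ d + [:c:]" using hg unfolding h_def by (metis diff_add_cancel)
  have gdeg: "degree g = d" unfolding g_def
    by (subst degree_prod_eq_sum_degree) (auto simp: cardA)
  have glead: "lead_coeff g = 1" unfolding g_def by (simp add: lead_coeff_prod)
  have g0: "g \<noteq> 0" using glead by auto
  have gpoly: "poly g z = (\<Prod>w\<in>A. z - w)" for z unfolding g_def by (simp add: poly_prod)
  have gb: "poly g \<beta> \<noteq> 0" using bA finA by (simp add: gpoly)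
  have a1A: "\<alpha> 1 \<in> A" unfolding A_def using d2 by auto
  have ga1: "poly g (\<alpha> 1) = 0" unfolding gpoly using finA a1A by (auto simp: prod_zero_iff)
  have pdg0: "pderiv g \<noteq> 0" using gdeg d2 by (simp add: pderiv_eq_0_iff)
  have "pderiv f = pderiv (g ^ d) + pderiv [:c:]" by (subst fg) (rule pderiv_add)
  also have "pderiv [:c:] = 0" by (simp add: pderiv_pCons)
  finally have pf: "pderiv f = smult (of_nat d) (g ^ (d-1) * pderiv g)"
    by (simp only: pderiv_power add_0_right)
  have "local_degree f \<beta> = d" using ld \<beta>_def by auto
  then have "Suc (order \<beta> (pderiv f)) = d" using local_deg[OF deg1] by simp
  moreover have "order \<beta> (pderiv f) = order \<beta> (pderiv g)"
  proof -
    have "order \<beta> (pderiv f) = order \<beta> (g ^ (d-1) * pderiv g)"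
      using pf d2 by (simp add: order_smult)
    also have "\<dots> = order \<beta> (g ^ (d-1)) + order \<beta> (pderiv g)"
      using g0 pdg0 by (simp add: order_mult)
    also have "order \<beta> (g ^ (d-1)) = 0" using gb by (simp add: order_0I)
    finally show ?thesis by simp
  qed
  ultimately have ordpg: "order \<beta> (pderiv g) = d - 1" by simp
  have dpg: "degree (pderiv g) = d - 1" using gdeg by (simp add: degree_pderiv)
  have lpg: "lead_coeff (pderiv g) = of_nat d"
    using dpg gdeg glead d2 by (simp add: coeff_pderiv)
  have pg: "pderiv g = smult (of_nat d) ([:-\<beta>,1:]^(d-1))"
    using order_eq_degree[OF pdg0] ordpg dpg lpg by simp
  define r where "r = g - [:-\<beta>,1:]^d"
  have "pderiv r = 0" unfolding r_def using pg by (simp add: pderiv_diff pderiv_power pderiv_pCons)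
  then have "degree r = 0" by (simp add: pderiv_eq_0_iff)
  then have rc: "r = [:coeff r 0:]" by (metis degree_0_id)
  define e where "e = coeff r 0"
  have "g = [:e:] + [:-\<beta>,1:]^d" using rc unfolding r_def e_def by (simp only: diff_eq_eq)
  then have ge: "g = [:-\<beta>,1:]^d + [:e:]" by (simp only: add.commute)
  have "coeff f (d*d - 1) = 0" using cen degf unfolding centered_poly_def by (simp add: power2_eq_square)
  moreover have "coeff f (d*d - 1) = of_nat d * coeff g (d-1)"
  proof -
    have "coeff (g ^ Suc (d-1)) (Suc (d-1) * d - 1) = of_nat (Suc (d-1)) * coeff g (d-1)"
      by (rule coeff_power_second) (use gdeg glead d2 in auto)
    moreover have "d*d - 1 \<noteq> 0" using dd by simp
    moreover have "coeff [:c:] (d*d-1) = 0" using dd by (cases "d*d-1") auto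
    ultimately show ?thesis using fg d2 by (simp add: mult.commute)
  qed
  moreover have "coeff g (d-1) = - of_nat d * \<beta>"
  proof -
    have "coeff ([:-\<beta>,1:] ^ Suc (d-1)) (Suc (d-1) * 1 - 1) = of_nat (Suc (d-1)) * coeff [:-\<beta>,1:] (1-1)"
      by (rule coeff_power_second) auto
    moreover have "coeff [:e:] (d-1) = 0" using d2 by (cases "d-1") auto
    ultimately show ?thesis using ge d2 by simp
  qed
  ultimately have b0: "\<beta> = 0" using d2 by simp
  have e0: "e \<noteq> 0"
  proof
    assume "e = 0"
    then have "poly g (\<alpha> 1) = (\<alpha> 1) ^ d" using ge b0 by simp
    then have "\<alpha> 1 = 0" using ga1 by simp
    with a1A show False using bA b0 by simp
  qed
  have "f = (monom 1 d + [:e:]) ^ d + [:c:]" using fg ge b0 by (simp add: monom_altdef)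
  then show ?thesis using e0 by blast
qed


lemma dir1:
  fixes f :: "complex poly" and d :: nat and a b :: complex
  assumes d2: "d \<ge> 2" and a0: "a \<noteq> 0" and fdef: "f = (monom 1 d + [:a:]) ^ d + [:b:]"
    and degf: "degree f = d ^ 2"
  shows "\<exists>\<alpha> :: nat \<Rightarrow> complex.
             inj_on \<alpha> {1..d+1} \<and> \<alpha> ` {1..d+1} = crit_points f \<and>
             (\<forall>i\<in>{1..d+1}. local_degree f (\<alpha> i) = d) \<and>
             (\<forall>i\<in>{1..d}. poly f (\<alpha> i) = poly f (\<alpha> 1))"
proof -
  define p where "p = monom 1 d + [:a:]"
  define S where "S = {z::complex. z ^ d = - a}"
  have dd: "d*d \<ge> 2*2" using mult_le_mono[OF d2 d2] .
  have deg1: "degree f \<ge> 1" using degf dd d2 by (simp add: power2_eq_square)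
  have polyp: "poly p z = z ^ d + a" for z unfolding p_def by (simp add: poly_monom)
  have cardS: "card S = d" unfolding S_def using card_nth_roots[of "-a" d] a0 d2 by simp
  have finS: "finite S" using cardS d2 by (intro card_ge_0_finite) simp
  obtain h where h: "bij_betw h {1..d} S" using ex_bij_betw_nat_finite_1[OF finS] cardS by auto
  define \<alpha> where "\<alpha> = (\<lambda>i. if i = d+1 then 0 else h i)"
  have S0: "0 \<notin> S" unfolding S_def using a0 d2 by (auto simp: power_0_left)
  have Sne0: "z \<noteq> 0" if "z \<in> S" for z using S0 that by auto
  have aeq: "\<alpha> i = h i" if "i \<in> {1..d}" for i using that unfolding \<alpha>_def by auto
  have imA: "\<alpha> ` {1..d} = S"
  proof -
    have "\<alpha> ` {1..d} = h ` {1..d}" by (rule image_cong[OF refl]) (rule aeq)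
    then show ?thesis using bij_betw_imp_surj_on[OF h] by simp
  qed
  have injA: "inj_on \<alpha> {1..d}"
  proof -
    have "inj_on \<alpha> {1..d} = inj_on h {1..d}" by (rule inj_on_cong) (rule aeq)
    then show ?thesis using bij_betw_imp_inj_on[OF h] by simp
  qed
  have ival: "{1..d+1} = insert (d+1) {1..d}" by auto
  have ad: "\<alpha> (d+1) = 0" unfolding \<alpha>_def by simp
  have inj: "inj_on \<alpha> {1..d+1}"
    unfolding ival using injA imA S0 ad by simp
  have im: "\<alpha> ` {1..d+1} = insert 0 S" unfolding ival using imA ad by simp
  have pp: "pderiv p = monom (of_nat d) (d-1)" unfolding p_def
    by (simp add: pderiv_add pderiv_monom pderiv_pCons)
  have "pderiv f = pderiv (p ^ d) + pderiv [:b:]" unfolding fdef p_def by (rule pderiv_add)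
  also have "pderiv [:b:] = 0" by (simp add: pderiv_pCons)
  finally have pf: "pderiv f = smult (of_nat d) (p ^ (d-1) * monom (of_nat d) (d-1))"
    by (simp only: pderiv_power add_0_right pp)
  have ppf: "poly (pderiv f) z = of_nat d * ((z^d + a) ^ (d-1) * (of_nat d * z ^ (d-1)))" for z
    unfolding pf by (simp add: poly_monom polyp)
  have crit: "crit_points f = insert 0 S"
  proof -
    have "poly (pderiv f) z = 0 \<longleftrightarrow> z = 0 \<or> z \<in> S" for z
    proof -
      have dn: "(of_nat d :: complex) \<noteq> 0" using d2 by simp
      have "poly (pderiv f) z = 0 \<longleftrightarrow> (z^d + a) ^ (d-1) = 0 \<or> z ^ (d-1) = 0"
        unfolding ppf using dn by simp
      also have "\<dots> \<longleftrightarrow> z^d + a = 0 \<or> z = 0" using d2 by simp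
      also have "z^d + a = 0 \<longleftrightarrow> z \<in> S" unfolding S_def by (simp add: eq_neg_iff_add_eq_0)
      finally show ?thesis by blast
    qed
    then show ?thesis unfolding crit_points_def by auto
  qed
  have p0: "p \<noteq> 0"
  proof
    assume "p = 0"
    then have "poly p 0 = 0" by simp
    then show False using a0 d2 unfolding polyp by (simp add: power_0_left)
  qed
  have m0: "monom (of_nat d) (d-1) \<noteq> (0::complex poly)" using d2 by simp
  have ordm: "order z (monom (of_nat d) (d-1)) = (if z = 0 then d - 1 else 0)" for z :: complex
  proof (cases "z = 0")
    case True
    have e: "monom (of_nat d) (d-1) = smult (of_nat d) ([:0,1:] ^ (d-1))" by (simp add: monom_altdef)
    have o: "order (0::complex) ([:0,1:]^(d-1)) = d-1" using order_power_n_n[of "0::complex" "d-1"] by simp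
    have dn: "(of_nat d :: complex) \<noteq> 0" using d2 by simp
    show ?thesis unfolding e True using o order_smult[OF dn, of 0 "[:0,1:]^(d-1)"] by simp
  next
    case False
    have dn: "(of_nat d :: complex) \<noteq> 0" using d2 by simp
    have "poly (monom (of_nat d) (d-1)) z \<noteq> 0" using False dn by (simp add: poly_monom)
    then show ?thesis using False by (simp add: order_0I)
  qed
  have ordp: "order z p = (if z \<in> S then 1 else 0)" for z
  proof (cases "z \<in> S")
    case True
    have "poly p z = 0" using True unfolding S_def polyp by simp
    from order_pderiv[OF p0 this] have "order z p = Suc (order z (pderiv p))" .
    moreover have "poly (pderiv p) z \<noteq> 0"
    proof -
      have dn: "(of_nat d :: complex) \<noteq> 0" using d2 by simp
      then show ?thesis using Sne0[OF True] unfolding pp by (simp add: poly_monom)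
    qed
    ultimately show ?thesis using True by (simp add: order_0I)
  next
    case False
    then have "\<not> z ^ d = - a" unfolding S_def by simp
    then have "poly p z \<noteq> 0" unfolding polyp by (simp only: eq_neg_iff_add_eq_0 not_False_eq_True)
    then show ?thesis using False by (simp add: order_0I)
  qed
  have ordpf: "order z (pderiv f) = d - 1" if "z \<in> insert 0 S" for z
  proof -
    have "order z (pderiv f) = order z (p ^ (d-1) * monom (of_nat d) (d-1))"
      unfolding pf using d2 by (simp add: order_smult)
    also have "\<dots> = order z (p ^ (d-1)) + order z (monom (of_nat d) (d-1))"
      using p0 m0 by (simp add: order_mult)
    also have "\<dots> = (d-1) * order z p + order z (monom (of_nat d) (d-1))"
      using p0 by (simp add: order_pow)
    finally show ?thesis using that S0 unfolding ordp ordm by auto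
  qed
  have ld: "\<forall>i\<in>{1..d+1}. local_degree f (\<alpha> i) = d"
  proof
    fix i assume "i \<in> {1..d+1}"
    then have "\<alpha> i \<in> insert 0 S" using im by blast
    then show "local_degree f (\<alpha> i) = d" using local_deg[OF deg1] ordpf d2 by simp
  qed
  have polyf: "poly f z = (z^d + a) ^ d + b" for z unfolding fdef using polyp[unfolded p_def] by simp
  have fv: "poly f (\<alpha> i) = b" if "i \<in> {1..d}" for i
  proof -
    have "\<alpha> i \<in> S" using imA that by blast
    then show ?thesis unfolding polyf S_def using d2 by simp
  qed
  have "\<forall>i\<in>{1..d}. poly f (\<alpha> i) = poly f (\<alpha> 1)"
    using fv d2 by auto
  then show ?thesis using inj im crit ld by metis
qed


theorem lemma3p1:
  fixes f :: "complex poly" and d :: nat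
  assumes "d \<ge> 2"
    and "monic_poly f" and "centered_poly f"
    and "degree f = d ^ 2"
  shows "(\<exists>a b. a \<noteq> 0 \<and> f = (monom 1 d + [:a:]) ^ d + [:b:]) \<longleftrightarrow>
         (\<exists>\<alpha> :: nat \<Rightarrow> complex.
             inj_on \<alpha> {1..d+1} \<and> \<alpha> ` {1..d+1} = crit_points f \<and>
             (\<forall>i\<in>{1..d+1}. local_degree f (\<alpha> i) = d) \<and>
             (\<forall>i\<in>{1..d}. poly f (\<alpha> i) = poly f (\<alpha> 1)))"
proof
  assume "\<exists>a b. a \<noteq> 0 \<and> f = (monom 1 d + [:a:]) ^ d + [:b:]"
  then obtain a b where ab: "a \<noteq> 0" "f = (monom 1 d + [:a:]) ^ d + [:b:]" by blast
  show "\<exists>\<alpha> :: nat \<Rightarrow> complex.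
             inj_on \<alpha> {1..d+1} \<and> \<alpha> ` {1..d+1} = crit_points f \<and>
             (\<forall>i\<in>{1..d+1}. local_degree f (\<alpha> i) = d) \<and>
             (\<forall>i\<in>{1..d}. poly f (\<alpha> i) = poly f (\<alpha> 1))"
    by (rule dir1[OF assms(1) ab assms(4)])
next
  assume "\<exists>\<alpha> :: nat \<Rightarrow> complex.
             inj_on \<alpha> {1..d+1} \<and> \<alpha> ` {1..d+1} = crit_points f \<and>
             (\<forall>i\<in>{1..d+1}. local_degree f (\<alpha> i) = d) \<and>
             (\<forall>i\<in>{1..d}. poly f (\<alpha> i) = poly f (\<alpha> 1))"
  then obtain \<alpha> :: "nat \<Rightarrow> complex" where
    al: "inj_on \<alpha> {1..d+1}" "\<alpha> ` {1..d+1} = crit_points f"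
    "\<forall>i\<in>{1..d+1}. local_degree f (\<alpha> i) = d"
    "\<forall>i\<in>{1..d}. poly f (\<alpha> i) = poly f (\<alpha> 1)" by blast
  show "\<exists>a b. a \<noteq> 0 \<and> f = (monom 1 d + [:a:]) ^ d + [:b:]"
    by (rule dir2[OF assms al])
qed

end
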